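(* Let $U\in\mathcal U_n$ with order $\prec$, let $w=q(U)$ and let $f=f_U$ be the associated permutation. Define $\prec_f$ on $\{1,\dots,n\}$ by $i\prec_f j$ iff $f^{-1}(i)\prec_{P(w)}f^{-1}(j)$. Then $\prec_f$ coincides with $\prec$.
   Context: A unit interval order on $\{1,\dots,n\}$ is a relation $\prec$ such that there are closed intervals $I_1,\dots,I_n$ of length $1$ in $\mathbb R$, numbered from left to right, with $i\prec j$ iff $I_i$ lies strictly to the left of $I_j$; $\mathcal U_n$ is the set of these. For a sequence $w=(w_1,\dots,w_n)$ of nonnegative integers, $P(w)$ is the poset on $\{1,\dots,n\}$ with order $\prec_{P(w)}$: $i\prec_{P(w)} j$ iff $w_j-w_i\ge2$, or $w_j-w_i=1$ and $i<j$. Levels: $\ell(1)=0$ and $\ell(j)=\max_{i\prec j}\ell(i)+1$ for $j\ge2$, with $\ell(j)=0$ if no $i\prec j$. Algorithm: $q_1=(0)$; given $q_{i-1}$, let $C_i$ be the number of $k\prec i$ with $\ell(k)=\ell(i)-1$, and obtain $q_i$ by inserting a letter $\ell(i)$ into $q_{i-1}$ directly after the (possibly empty) run of letters $\ell(i)$ immediately following the $C_i$-th occurrence of the letter $\ell(i)-1$ (the 0-th occurrence meaning the start of the word); $q(U)=q_n$. The permutation $f_U$ of $\{1,\dots,n\}$: with $w=q(U)$, number the positions $i$ with $w_i=0$ from left to right starting at $1$, then continue numbering the positions with $w_i=1$ from left to right, then those with $w_i=2$, and so on; $f_U(i)$ is the number assigned to position $i$. *)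

theory Defs
  imports Complex_Main
begin

text \<open>Relations on {1..n} are represented as predicates on nat, false outside {1..n}.\<close>

text \<open>Unit interval orders: closed unit intervals [x i, x i + 1], numbered from left
  to right (left endpoints non-decreasing), with i prec j iff interval i lies strictly
  to the left of interval j.\<close>
definition unit_interval_order :: "nat \<Rightarrow> (nat \<Rightarrow> nat \<Rightarrow> bool) \<Rightarrow> bool" where
  "unit_interval_order n R \<longleftrightarrow>
     (\<exists>x :: nat \<Rightarrow> real.
        (\<forall>i j. 1 \<le> i \<and> i \<le> j \<and> j \<le> n \<longrightarrow> x i \<le> x j) \<and>
        (\<forall>i j. R i j \<longleftrightarrow> i \<in> {1..n} \<and> j \<in> {1..n} \<and> x i + 1 < x j))"

text \<open>Levels. In a unit interval order, i prec j implies i < j, so only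
  predecessors i < j need to be considered.\<close>
function level :: "(nat \<Rightarrow> nat \<Rightarrow> bool) \<Rightarrow> nat \<Rightarrow> nat" where
  "level R j =
     (let L = [Suc (level R i). i \<leftarrow> filter (\<lambda>i. R i j) [0..<j]]
      in if L = [] then 0 else Max (set L))"
  by pat_completeness auto
termination
  by (relation "measure snd") auto

declare level.simps [simp del]

definition after_occ :: "nat \<Rightarrow> nat \<Rightarrow> nat list \<Rightarrow> nat" where
  "after_occ c a w =
     (if c = 0 then 0 else Suc (filter (\<lambda>k. w ! k = a) [0..<length w] ! (c - 1)))"

definition insert_step :: "nat \<Rightarrow> nat \<Rightarrow> nat \<Rightarrow> nat list \<Rightarrow> nat list" where
  "insert_step c a b w =
     (let p = after_occ c a w;
          r = length (takeWhile (\<lambda>x. x = b) (drop p w))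
      in take (p + r) w @ [b] @ drop (p + r) w)"

definition Ccount :: "(nat \<Rightarrow> nat \<Rightarrow> bool) \<Rightarrow> nat \<Rightarrow> nat" where
  "Ccount R i = card {k. k < i \<and> R k i \<and> Suc (level R k) = level R i}"

fun qseq :: "(nat \<Rightarrow> nat \<Rightarrow> bool) \<Rightarrow> nat \<Rightarrow> nat list" where
  "qseq R 0 = []"
| "qseq R (Suc 0) = [0]"
| "qseq R (Suc (Suc m)) =
     insert_step (Ccount R (Suc (Suc m))) (level R (Suc (Suc m)) - 1)
                 (level R (Suc (Suc m))) (qseq R (Suc m))"

definition qU :: "nat \<Rightarrow> (nat \<Rightarrow> nat \<Rightarrow> bool) \<Rightarrow> nat list" where
  "qU n R = qseq R n"

text \<open>The poset P(w); the word w = (w_1,...,w_n) is stored 0-indexed as a list.\<close>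
definition Pw :: "nat list \<Rightarrow> nat \<Rightarrow> nat \<Rightarrow> bool" where
  "Pw w i j \<longleftrightarrow> i \<in> {1..length w} \<and> j \<in> {1..length w} \<and>
     (int (w ! (j - 1)) - int (w ! (i - 1)) \<ge> 2 \<or>
      (int (w ! (j - 1)) - int (w ! (i - 1)) = 1 \<and> i < j))"

text \<open>The numbering of positions: first the positions carrying 0 from left to right,
  then those carrying 1, etc. Position i gets number
  #{k : w_k < w_i} + #{k \<le> i : w_k = w_i}.\<close>
definition fperm :: "nat list \<Rightarrow> nat \<Rightarrow> nat" where
  "fperm w i = card {k \<in> {1..length w}. w ! (k - 1) < w ! (i - 1)}
             + card {k \<in> {1..i}. w ! (k - 1) = w ! (i - 1)}"

definition fU :: "nat \<Rightarrow> (nat \<Rightarrow> nat \<Rightarrow> bool) \<Rightarrow> nat \<Rightarrow> nat" where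
  "fU n R = fperm (qU n R)"

end

theory Submission imports Defs begin

definition ins_pos :: "(nat \<Rightarrow> nat \<Rightarrow> bool) \<Rightarrow> nat \<Rightarrow> nat list \<Rightarrow> nat" where
  "ins_pos R j w = (let b = level R j; p = after_occ (Ccount R j) (b - 1) w;
      r = length (takeWhile (\<lambda>x. x = b) (drop p w)) in p + r)"

fun Elist :: "(nat \<Rightarrow> nat \<Rightarrow> bool) \<Rightarrow> nat \<Rightarrow> nat list" where
  "Elist R 0 = []"
| "Elist R (Suc 0) = [1]"
| "Elist R (Suc (Suc m)) = (let E = Elist R (Suc m); k = ins_pos R (Suc (Suc m)) (map (level R) E)
      in take k E @ [Suc (Suc m)] @ drop k E)"

lemma qseq_Elist: "level R (Suc 0) = 0 \<Longrightarrow> qseq R m = map (level R) (Elist R m)"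
  by (induction R m rule: qseq.induct)
     (simp_all add: insert_step_def ins_pos_def Let_def take_map drop_map)

lemma nth_ins: "t < Suc (length E) \<Longrightarrow> k \<le> length E \<Longrightarrow>
  (take k E @ [j] @ drop k E) ! t = (if t < k then E ! t else if t = k then j else E ! (t - 1))"
  by (auto simp: nth_append min_def)

locale uio =
  fixes n :: nat and R :: "nat \<Rightarrow> nat \<Rightarrow> bool" and a :: "nat \<Rightarrow> nat"
  assumes Rdef: "R i j \<longleftrightarrow> (1 \<le> i \<and> i \<le> a j \<and> 1 \<le> j \<and> j \<le> n)"
    and a_lt: "1 \<le> j \<Longrightarrow> j \<le> n \<Longrightarrow> a j < j"
    and a_mono: "i \<le> j \<Longrightarrow> j \<le> n \<Longrightarrow> 1 \<le> i \<Longrightarrow> a i \<le> a j"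
begin

abbreviation "lev \<equiv> level R"

lemma Max_mono_img:
  assumes "1 \<le> (m::nat)" "\<And>i. 1 \<le> i \<Longrightarrow> i \<le> m \<Longrightarrow> f i \<le> (f m::nat)"
  shows "Max (f ` {1..m}) = f m"
  by (rule Max_eqI) (use assms in auto)

lemma filt_upt: "filter (\<lambda>i. 1 \<le> i \<and> i \<le> k) [0..<j] = [1..<min j (Suc k)]"
proof (induction j)
  case 0 then show ?case by simp
next
  case (Suc j)
  have hs: "filter (\<lambda>i. 1 \<le> i \<and> i \<le> k) [0..<Suc j] = [1..<min j (Suc k)] @ filter (\<lambda>i. 1 \<le> i \<and> i \<le> k) [j]"
    using Suc by simp
  then show ?case
  proof (cases "1 \<le> j \<and> j \<le> k")
    case True then show ?thesis using Suc by (simp add: min_def)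
  next
    case False
    show ?thesis
    proof (cases "j = 0")
      case True then show ?thesis by simp
    next
      case j0: False
    then have "min (Suc j) (Suc k) = min j (Suc k)" using False by (auto simp: min_def)
    moreover have "filter (\<lambda>i. 1 \<le> i \<and> i \<le> k) [j] = []" using False by simp
    ultimately show ?thesis using hs by (simp only: append_Nil2)
  qed
  qed
qed

lemma lev_rec0:
  assumes "1 \<le> j" "j \<le> n" "\<And>i. 1 \<le> i \<Longrightarrow> i \<le> a j \<Longrightarrow> lev i \<le> lev (a j)"
  shows "lev j = (if a j = 0 then 0 else Suc (lev (a j)))"
proof -
  have f: "filter (\<lambda>i. R i j) [0..<j] = [1..<Suc (a j)]"
  proof -
    have "filter (\<lambda>i. R i j) [0..<j] = filter (\<lambda>i. 1 \<le> i \<and> i \<le> a j) [0..<j]"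
      using assms(1,2) by (intro filter_cong) (auto simp: Rdef)
    also have "\<dots> = [1..<min j (Suc (a j))]"
      by (rule filt_upt)
    also have "min j (Suc (a j)) = Suc (a j)" using a_lt[OF assms(1,2)] by simp
    finally have "filter (\<lambda>i. R i j) [0..<j] = [1..<Suc (a j)]" by (simp only:)
    then show ?thesis .
  qed
  show ?thesis
  proof (cases "a j = 0")
    case True
    then show ?thesis by (subst level.simps) (simp add: f)
  next
    case False
    have "set (map (\<lambda>i. Suc (lev i)) [1..<Suc (a j)]) = (\<lambda>i. Suc (lev i)) ` {1..a j}" by auto
    moreover have "Max ((\<lambda>i. Suc (lev i)) ` {1..a j}) = Suc (lev (a j))"
      using False assms(3) by (intro Max_mono_img) auto
    ultimately show ?thesis using False by (subst level.simps) (simp add: f)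
  qed
qed

lemma lev_mono_aux: "j \<le> n \<Longrightarrow> \<forall>i. 1 \<le> i \<and> i \<le> j \<longrightarrow> lev i \<le> lev j"
proof (induction j rule: less_induct)
  case (less j)
  show ?case
  proof (intro allI impI)
    fix i assume i: "1 \<le> i \<and> i \<le> j"
    show "lev i \<le> lev j"
    proof (cases "i = j")
      case True then show ?thesis by simp
    next
      case False
      then have ij: "i \<le> j - 1" "1 \<le> j - 1" "j - 1 < j" using i by auto
      have h1: "lev i \<le> lev (j-1)" using less.IH[OF ij(3)] less.prems ij i by auto
      have aj0: "a (j-1) < j-1" using ij less.prems by (intro a_lt) auto
      have aj: "a j < j" "a (j-1) < j" using a_lt[of j] aj0 i less.prems ij by auto
      have r1: "lev j = (if a j = 0 then 0 else Suc (lev (a j)))"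
        using less.IH[OF aj(1)] aj less.prems i by (intro lev_rec0) auto
      have r2: "lev (j-1) = (if a (j-1) = 0 then 0 else Suc (lev (a (j-1))))"
        using less.IH[OF aj(2)] aj less.prems ij by (intro lev_rec0) auto
      have am: "a (j-1) \<le> a j" using a_mono[of "j-1" j] less.prems ij by auto
      have "lev (j-1) \<le> lev j"
      proof (cases "a (j-1) = 0")
        case True then show ?thesis using r2 by simp
      next
        case False
        then have "lev (a (j-1)) \<le> lev (a j)" using less.IH[OF aj(1)] aj am less.prems by auto
        then show ?thesis using r1 r2 False am by auto
      qed
      then show ?thesis using h1 by simp
    qed
  qed
qed

lemma lev_mono: "1 \<le> i \<Longrightarrow> i \<le> j \<Longrightarrow> j \<le> n \<Longrightarrow> lev i \<le> lev j"
  using lev_mono_aux by blast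

lemma lev_rec: "1 \<le> j \<Longrightarrow> j \<le> n \<Longrightarrow> lev j = (if a j = 0 then 0 else Suc (lev (a j)))"
  using a_lt[of j] by (intro lev_rec0) (auto intro!: lev_mono)

definition Inv :: "nat \<Rightarrow> nat list \<Rightarrow> bool" where
  "Inv m E \<longleftrightarrow> distinct E \<and> set E = {1..m} \<and>
    (\<forall>t u. t < length E \<and> u < length E \<and> lev (E!t) = lev (E!u) \<and> E!t < E!u \<longrightarrow> t < u) \<and>
    (\<forall>t u. t < length E \<and> u < length E \<and> lev (E!u) = Suc (lev (E!t)) \<longrightarrow> (t < u \<longleftrightarrow> E!t \<le> a (E!u))) \<and>
    (\<forall>t u. t < u \<and> u < length E \<and> lev (E!u) = lev m \<and> lev (E!t) \<noteq> lev m \<longrightarrow>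
        (\<exists>v. t \<le> v \<and> v < u \<and> E!v = a (E!u)))"

lemma ins_inv:
  assumes inv: "Inv m E" and m1: "1 \<le> m" and jn: "Suc m \<le> n" and kl: "k \<le> length E"
    and A: "\<And>t. t < length E \<Longrightarrow> Suc (lev (E!t)) = lev (Suc m) \<Longrightarrow> (t < k \<longleftrightarrow> E!t \<le> a (Suc m))"
    and B: "\<And>t. t < length E \<Longrightarrow> lev (E!t) = lev (Suc m) \<Longrightarrow> t < k"
    and C: "\<And>t. t < k \<Longrightarrow> lev (E!t) \<noteq> lev (Suc m) \<Longrightarrow> \<exists>v. t \<le> v \<and> v < k \<and> E!v = a (Suc m)"
  shows "Inv (Suc m) (take k E @ [Suc m] @ drop k E)"
proof -
  let ?j = "Suc m"
  let ?E = "take k E @ [Suc m] @ drop k E"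
  have d: "distinct E" and sE: "set E = {1..m}"
    and I1: "\<And>t u. t < length E \<Longrightarrow> u < length E \<Longrightarrow> lev (E!t) = lev (E!u) \<Longrightarrow> E!t < E!u \<Longrightarrow> t < u"
    and I2: "\<And>t u. t < length E \<Longrightarrow> u < length E \<Longrightarrow> lev (E!u) = Suc (lev (E!t)) \<Longrightarrow> (t < u \<longleftrightarrow> E!t \<le> a (E!u))"
    and I3: "\<And>t u. t < u \<Longrightarrow> u < length E \<Longrightarrow> lev (E!u) = lev m \<Longrightarrow> lev (E!t) \<noteq> lev m \<Longrightarrow>
        (\<exists>v. t \<le> v \<and> v < u \<and> E!v = a (E!u))"
    using inv unfolding Inv_def by blast+
  have len: "length E = m" using d sE distinct_card by fastforce
  have inE: "\<And>t. t < length E \<Longrightarrow> 1 \<le> E!t \<and> E!t \<le> m" using sE nth_mem by fastforce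
  have levle: "\<And>t. t < length E \<Longrightarrow> lev (E!t) \<le> lev m" using inE jn by (intro lev_mono) auto
  have Lm: "lev m \<le> lev ?j" using m1 jn by (intro lev_mono) auto
  have len': "length ?E = Suc (length E)" using kl by simp
  have nth': "\<And>t. t < length ?E \<Longrightarrow> ?E ! t = (if t < k then E ! t else if t = k then ?j else E ! (t - 1))"
    using nth_ins[of _ E k "Suc m"] kl len' by simp
  have jnot: "?j \<notin> set E" using sE by auto
  have dE: "distinct ?E" using d jnot kl
  proof -
    have disj: "set (take k E) \<inter> set (drop k E) = {}" by (metis d append_take_drop_id distinct_append)
    then show ?thesis using jnot d by (auto dest: in_set_takeD in_set_dropD)
  qed
  have sE': "set ?E = {1..Suc m}"
  proof -
    have "set ?E = insert ?j (set (take k E) \<union> set (drop k E))" by auto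
    also have "set (take k E) \<union> set (drop k E) = set E" by (metis append_take_drop_id set_append)
    finally show ?thesis using sE by auto
  qed
  have J1: "\<forall>t u. t < length ?E \<and> u < length ?E \<and> lev (?E!t) = lev (?E!u) \<and> ?E!t < ?E!u \<longrightarrow> t < u"
  proof (intro allI impI)
    fix t u assume h: "t < length ?E \<and> u < length ?E \<and> lev (?E!t) = lev (?E!u) \<and> ?E!t < ?E!u"
    show "t < u"
    proof (cases "t < k")
      case t: True
      show ?thesis
      proof (cases "u < k")
        case True then show ?thesis using h t nth' I1[of t u] kl by auto
      qed (use t in auto)
    next
      case tk: False
      show ?thesis
      proof (cases "t = k")
        case True then show ?thesis using h nth'[of t] nth'[of u] inE[of u] inE[of "u - 1"] len' kl
          by (auto split: if_splits)
      next
        case False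
        then have t1: "?E!t = E!(t-1)" "t - 1 < length E" "k \<le> t - 1" using tk nth'[of t] h len' by auto
        show ?thesis
        proof (cases "u < k")
          case True
          then show ?thesis using h t1 nth'[of u] I1[of "t-1" u] kl by auto
        next
          case uk: False
          show ?thesis
          proof (cases "u = k")
            case True then show ?thesis using h t1 nth'[of u] B[of "t-1"] by auto
          next
            case False
            then have u1: "k < u" "u - 1 < length E" "?E!u = E!(u-1)" using uk h len' nth'[of u] by auto
            then have "t - 1 < u - 1" using h t1 I1[of "t-1" "u-1"] by auto
            then show ?thesis using tk by arith
          qed
        qed
      qed
    qed
  qed
  define g where "g t = (if t < k then t else Suc t)" for t
  have g: "\<And>t. t < length E \<Longrightarrow> g t < length ?E \<and> ?E ! (g t) = E ! t \<and> g t \<noteq> k"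
    using nth' len' by (auto simp: g_def)
  have gmono: "\<And>t u. g t < g u \<longleftrightarrow> t < u" "\<And>t u. g t \<le> g u \<longleftrightarrow> t \<le> u" by (auto simp: g_def)
  have ginv: "\<And>t. t < length ?E \<Longrightarrow> t \<noteq> k \<Longrightarrow> \<exists>t0. t0 < length E \<and> t = g t0"
  proof -
    fix t assume "t < length ?E" "t \<noteq> k"
    then show "\<exists>t0. t0 < length E \<and> t = g t0" using len' kl
    proof (cases "t < k")
      case True then show ?thesis using \<open>t < length ?E\<close> kl len' by (intro exI[of _ t]) (auto simp: g_def)
    next
      case False then show ?thesis using \<open>t < length ?E\<close> \<open>t \<noteq> k\<close> len'
        by (intro exI[of _ "t - 1"]) (auto simp: g_def)
    qed
  qed
  have J2: "\<forall>t u. t < length ?E \<and> u < length ?E \<and> lev (?E!u) = Suc (lev (?E!t)) \<longrightarrow> (t < u \<longleftrightarrow> ?E!t \<le> a (?E!u))"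
  proof (intro allI impI)
    fix t u assume h: "t < length ?E \<and> u < length ?E \<and> lev (?E!u) = Suc (lev (?E!t))"
    show "t < u \<longleftrightarrow> ?E!t \<le> a (?E!u)"
    proof (cases "u = k")
      case u: True
      then have tk: "t \<noteq> k" using h by auto
      then obtain t0 where t0: "t0 < length E" "t = g t0" using ginv h by blast
      then show ?thesis using A[of t0] g[of t0] u h nth'[of k] kl by (auto simp: g_def)
    next
      case False
      then obtain u0 where u0: "u0 < length E" "u = g u0" using ginv h by blast
      show ?thesis
      proof (cases "t = k")
        case True
        then show ?thesis using h g[of u0] u0 levle[of u0] Lm nth'[of k] kl by auto
      next
        case False
        then obtain t0 where t0: "t0 < length E" "t = g t0" using ginv h by blast
        then show ?thesis using I2[of t0 u0] g[of t0] g[of u0] u0 h gmono by auto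
      qed
    qed
  qed
  have J3: "\<forall>t u. t < u \<and> u < length ?E \<and> lev (?E!u) = lev ?j \<and> lev (?E!t) \<noteq> lev ?j \<longrightarrow>
        (\<exists>v. t \<le> v \<and> v < u \<and> ?E!v = a (?E!u))"
  proof (intro allI impI)
    fix t u assume h: "t < u \<and> u < length ?E \<and> lev (?E!u) = lev ?j \<and> lev (?E!t) \<noteq> lev ?j"
    show "\<exists>v. t \<le> v \<and> v < u \<and> ?E!v = a (?E!u)"
    proof (cases "u = k")
      case u: True
      then have "t < k" "?E!t = E!t" using h nth' by auto
      then obtain v where v: "t \<le> v" "v < k" "E!v = a ?j" using C h by auto
      then have "?E!v = E!v" using nth' h u by auto
      then show ?thesis using v u h nth'[of k] by auto
    next
      case False
      then obtain u0 where u0: "u0 < length E" "u = g u0" using ginv h by blast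
      have tk: "t \<noteq> k" using h nth'[of k] len' kl by auto
      have "t < length ?E" using h by auto
      then obtain t0 where t0: "t0 < length E" "t = g t0" using ginv tk by blast
      have levs: "lev (E!u0) = lev m" using levle[of u0] Lm h g[of u0] u0 by auto
      have "lev (E!t0) \<noteq> lev m" using h g[of t0] t0 levs g[of u0] u0 by auto
      then obtain v0 where v0: "t0 \<le> v0" "v0 < u0" "E!v0 = a (E!u0)"
        using I3[of t0 u0] levs u0 t0 h gmono by auto
      show ?thesis using v0 g[of v0] g[of u0] u0 t0 gmono
        by (intro exI[of _ "g v0"]) auto
    qed
  qed
  show ?thesis unfolding Inv_def using dE sE' J1 J2 J3 by blast
qed

lemma Inv_facts:
  assumes "Inv m E"
  shows "distinct E" "set E = {1..m}"
    "\<And>t u. t < length E \<Longrightarrow> u < length E \<Longrightarrow> lev (E!t) = lev (E!u) \<Longrightarrow> E!t < E!u \<Longrightarrow> t < u"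
    "\<And>t u. t < length E \<Longrightarrow> u < length E \<Longrightarrow> lev (E!u) = Suc (lev (E!t)) \<Longrightarrow> (t < u \<longleftrightarrow> E!t \<le> a (E!u))"
    "\<And>t u. t < u \<Longrightarrow> u < length E \<Longrightarrow> lev (E!u) = lev m \<Longrightarrow> lev (E!t) \<noteq> lev m \<Longrightarrow>
        (\<exists>v. t \<le> v \<and> v < u \<and> E!v = a (E!u))"
  using assms unfolding Inv_def by blast+

lemma step:
  assumes inv: "Inv m E" and m1: "1 \<le> m" and jn: "Suc m \<le> n"
  shows "Inv (Suc m) (take (ins_pos R (Suc m) (map lev E)) E @ [Suc m] @ drop (ins_pos R (Suc m) (map lev E)) E)"
proof -
  note F = Inv_facts[OF inv]
  have d: "distinct E" and sE: "set E = {1..m}" using F(1,2) .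
  have inE: "\<And>t. t < length E \<Longrightarrow> 1 \<le> E!t \<and> E!t \<le> m" using sE nth_mem by fastforce
  have levle: "\<And>t. t < length E \<Longrightarrow> lev (E!t) \<le> lev m" using inE jn by (intro lev_mono) auto
  have Lm: "lev m \<le> lev (Suc m)" using m1 jn by (intro lev_mono) auto
  let ?j = "Suc m"
  let ?x = "a (Suc m)"
  let ?w = "map lev E"
  have xlt: "?x < ?j" using a_lt[of ?j] jn by auto
  have rec: "lev ?j = (if ?x = 0 then 0 else Suc (lev ?x))" using lev_rec[of ?j] jn by auto
  show ?thesis
  proof (cases "?x = 0")
    case True
    then have lj: "lev ?j = 0" using rec by simp
    have all0: "\<And>t. t < length E \<Longrightarrow> lev (E!t) = 0" using levle Lm lj by fastforce
    have cc: "Ccount R ?j = 0" unfolding Ccount_def using lj by simp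
    have tw: "takeWhile (\<lambda>c. c = 0) ?w = ?w"
      using all0 by (auto simp: takeWhile_eq_all_conv in_set_conv_nth)
    have ip: "ins_pos R ?j ?w = length E"
    proof -
      have tw': "length (takeWhile (\<lambda>x. x = 0) (map lev E)) = length E" using tw by (metis length_map)
      show ?thesis unfolding ins_pos_def Let_def by (simp add: cc lj after_occ_def tw')
    qed
    show ?thesis unfolding ip
      by (rule ins_inv[OF inv m1 jn]) (use lj all0 in auto)
  next
    case False
    define b where "b = lev ?x"
    have lj: "lev ?j = Suc b" using rec False b_def by simp
    have xin: "?x \<in> set E" using sE False xlt by auto
    then obtain v0 where v0: "v0 < length E" "E!v0 = ?x" by (auto simp: in_set_conv_nth)
    define S where "S = {y. 1 \<le> y \<and> y < ?x \<and> lev y = b}"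
    define c0 where "c0 = card S"
    have finS: "finite S" unfolding S_def by (rule finite_subset[of _ "{..<?x}"]) auto
    have cc: "Ccount R ?j = Suc c0"
    proof -
      have "{k. k < ?j \<and> R k ?j \<and> Suc (lev k) = lev ?j} = insert ?x S"
        using xlt jn False by (auto simp: S_def Rdef lj b_def)
      moreover have "?x \<notin> S" by (simp add: S_def)
      ultimately show ?thesis unfolding Ccount_def c0_def using finS by simp
    qed
    let ?P = "\<lambda>t. ?w ! t = b"
    have up: "[0..<length ?w] = [0..<v0] @ v0 # [Suc v0..<length ?w]"
    proof -
      have "[0..<length ?w] = [0..<v0] @ [v0..<length ?w]"
        using upt_add_eq_append[of 0 v0 "length ?w - v0"] v0 by simp
      also have "[v0..<length ?w] = v0 # [Suc v0..<length ?w]" using v0 by (simp add: upt_conv_Cons)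
      finally show ?thesis .
    qed
    have lenf: "length (filter ?P [0..<v0]) = c0"
    proof -
      have "length (filter ?P [0..<v0]) = card {i. i < v0 \<and> lev (E!i) = b}"
        unfolding length_filter_conv_card using v0 by (intro arg_cong[where f=card]) auto
      also have "\<dots> = card ((nth E) ` {i. i < v0 \<and> lev (E!i) = b})"
        using d v0 by (intro card_image[symmetric] inj_on_nth) auto
      also have "(nth E) ` {i. i < v0 \<and> lev (E!i) = b} = S"
      proof
        show "(nth E) ` {i. i < v0 \<and> lev (E!i) = b} \<subseteq> S"
        proof
          fix y assume "y \<in> (nth E) ` {i. i < v0 \<and> lev (E!i) = b}"
          then obtain i where i: "i < v0" "lev (E!i) = b" "y = E!i" by auto
          have ne: "E!i \<noteq> ?x"
          proof
            assume "E!i = ?x"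
            then have "i = v0" using nth_eq_iff_index_eq[OF d _ v0(1)] i v0 by auto
            then show False using i by simp
          qed
          have "\<not> ?x < E!i" using F(3)[of v0 i] i v0 b_def by auto
          then show "y \<in> S" using ne i inE[of i] v0 by (auto simp: S_def)
        qed
        show "S \<subseteq> (nth E) ` {i. i < v0 \<and> lev (E!i) = b}"
        proof
          fix y assume y: "y \<in> S"
          then have "y \<in> set E" using sE xlt by (auto simp: S_def)
          then obtain i where i: "i < length E" "E!i = y" by (auto simp: in_set_conv_nth)
          have "i < v0" using F(3)[of i v0] i v0 y b_def by (auto simp: S_def)
          then show "y \<in> (nth E) ` {i. i < v0 \<and> lev (E!i) = b}" using i y by (auto simp: S_def)
        qed
      qed
      finally show ?thesis by (simp add: c0_def)
    qed
    have filt: "filter ?P [0..<length ?w] ! c0 = v0"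
    proof -
      have "?P v0" using v0 b_def by simp
      then have "filter ?P [0..<length ?w] = filter ?P [0..<v0] @ v0 # filter ?P [Suc v0..<length ?w]"
        by (subst up) simp
      then show ?thesis using lenf by (simp add: nth_append)
    qed
    have ao: "after_occ (Ccount R ?j) (lev ?j - 1) ?w = Suc v0"
      unfolding after_occ_def cc using filt lj by simp
    define p where "p = Suc v0"
    define ws where "ws = drop p ?w"
    define r where "r = length (takeWhile (\<lambda>c. c = lev ?j) ws)"
    define k where "k = p + r"
    have ip: "ins_pos R ?j ?w = k" unfolding ins_pos_def Let_def ao k_def r_def ws_def p_def by simp
    have lws: "length ws = length E - p" by (simp add: ws_def)
    have pl: "p \<le> length E" using v0 by (simp add: p_def)
    have rl: "r \<le> length ws" unfolding r_def by (rule length_takeWhile_le)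
    have K0: "k \<le> length E" using rl lws pl by (simp add: k_def)
    have K1: "\<And>t. p \<le> t \<Longrightarrow> t < k \<Longrightarrow> lev (E!t) = lev ?j"
    proof -
      fix t assume t: "p \<le> t" "t < k"
      define i where "i = t - p"
      have il: "i < length (takeWhile (\<lambda>c. c = lev ?j) ws)" using t by (simp add: i_def k_def r_def)
      have "ws ! i \<in> set (takeWhile (\<lambda>c. c = lev ?j) ws)" using nth_mem[OF il] takeWhile_nth[OF il] by simp
      then have "ws ! i = lev ?j" by (auto dest: set_takeWhileD)
      moreover have "i < length ws" using il length_takeWhile_le[of "(\<lambda>c. c = lev ?j)" ws] by linarith
      ultimately show "lev (E!t) = lev ?j" using t pl by (simp add: ws_def i_def)
    qed
    have K2: "k < length E \<Longrightarrow> lev (E!k) \<noteq> lev ?j"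
    proof -
      assume kl: "k < length E"
      then have "r < length ws" using lws pl by (simp add: k_def)
      then have "\<not> (ws ! r = lev ?j)" unfolding r_def by (rule nth_length_takeWhile)
      then show ?thesis using kl by (simp add: ws_def k_def)
    qed
    have pk: "p \<le> k" by (simp add: k_def)
    show ?thesis unfolding ip
    proof (rule ins_inv[OF inv m1 jn K0])
      fix t assume t: "t < length E" "Suc (lev (E!t)) = lev ?j"
      then have lb: "lev (E!t) = lev (E!v0)" using lj v0 b_def by simp
      show "t < k \<longleftrightarrow> E!t \<le> ?x"
      proof
        assume tk: "t < k"
        show "E!t \<le> ?x"
        proof (rule ccontr)
          assume "\<not> E!t \<le> ?x"
          then have "v0 < t" using F(3)[of v0 t] t v0 lb by auto
          then have "lev (E!t) = lev ?j" using K1[of t] tk by (simp add: p_def)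
          then show False using t by simp
        qed
      next
        assume le: "E!t \<le> ?x"
        have "t \<le> v0"
        proof (cases "E!t = ?x")
          case True then have "t = v0" using nth_eq_iff_index_eq[OF d t(1) v0(1)] v0(2) by simp
          then show ?thesis by simp
        next
          case False then show ?thesis using F(3)[of t v0] t v0 lb le by auto
        qed
        then show "t < k" using pk by (simp add: p_def)
      qed
    next
      fix t assume t: "t < length E" "lev (E!t) = lev ?j"
      let ?y = "E!t"
      have ay: "a ?y \<le> ?x" using inE[of t] t jn by (intro a_mono) auto
      have i2: "v0 < t \<longleftrightarrow> ?x \<le> a ?y" using F(4)[of v0 t] t v0 lj b_def by auto
      show "t < k"
      proof (cases "v0 < t")
        case False then show ?thesis using pk by (simp add: p_def)
      next
        case True
        then have ayx: "a ?y = ?x" using i2 ay by simp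
        show ?thesis
        proof (rule ccontr)
          assume "\<not> t < k"
          moreover have "k \<noteq> t" using K2 t by auto
          ultimately have kt: "k < t" by simp
          have lmj: "lev m = lev ?j" using levle[of t] Lm t by simp
          have "lev (E!k) \<noteq> lev m" using K2 kt t lmj by simp
          then obtain v where v: "k \<le> v" "v < t" "E!v = a ?y"
            using F(5)[of k t] kt t lmj by auto
          then have "E!v = E!v0" "v < length E" using ayx v0 t by auto
          then have "v = v0" using nth_eq_iff_index_eq[OF d _ v0(1)] by blast
          then show False using v pk by (simp add: p_def)
        qed
      qed
    next
      fix t assume t: "t < k" "lev (E!t) \<noteq> lev ?j"
      have "t \<le> v0"
      proof (rule ccontr)
        assume "\<not> t \<le> v0"
        then show False using K1[of t] t by (simp add: p_def)
      qed
      then show "\<exists>v. t \<le> v \<and> v < k \<and> E!v = ?x" using v0 pk by (intro exI[of _ v0]) (simp add: p_def)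
    qed
  qed
qed

lemma lev1: "1 \<le> n \<Longrightarrow> lev 1 = 0"
  using lev_rec[of 1] a_lt[of 1] by simp

lemma Inv_Elist: "1 \<le> m \<Longrightarrow> m \<le> n \<Longrightarrow> Inv m (Elist R m)"
proof (induction m rule: nat_induct_at_least)
  case base
  then show ?case using lev1 by (auto simp: Inv_def)
next
  case (Suc m)
  then have "Inv m (Elist R m)" by simp
  from step[OF this Suc.hyps Suc.prems] show ?case
    using Suc.hyps by (cases m) (auto simp: Let_def)
qed


lemma fin_main:
  "\<forall>i \<in> {1..n}. \<forall>j \<in> {1..n}.
     Pw (qseq R n) (inv_into {1..n} (fperm (qseq R n)) i) (inv_into {1..n} (fperm (qseq R n)) j)
     \<longleftrightarrow> R i j"
proof (cases "n = 0")
  case True then show ?thesis by simp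
next
  case False
  then have n1: "1 \<le> n" by simp
  define E where "E = Elist R n"
  have inv: "Inv n E" unfolding E_def using n1 by (intro Inv_Elist) auto
  note F = Inv_facts[OF inv]
  have d: "distinct E" and sE: "set E = {1..n}" using F(1,2) .
  have len: "length E = n" using d sE distinct_card by fastforce
  have q: "qseq R n = map lev E" unfolding E_def using qseq_Elist lev1 n1 by simp
  define w where "w = map lev E"
  have lw: "length w = n" using len by (simp add: w_def)
  have inE: "\<And>t. t < n \<Longrightarrow> 1 \<le> E!t \<and> E!t \<le> n" using sE nth_mem len by fastforce
  have posE: "\<And>z. z \<in> {1..n} \<Longrightarrow> \<exists>t. t < n \<and> E!t = z" using sE len by (auto simp: in_set_conv_nth)
  have injE: "inj_on (\<lambda>k. E!(k-1)) {1..n}"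
  proof (rule inj_onI)
    fix k k' assume h: "k \<in> {1..n}" "k' \<in> {1..n}" "E!(k-1) = E!(k'-1)"
    then have "k - 1 = k' - 1" using nth_eq_iff_index_eq[OF d, of "k-1" "k'-1"] len by auto
    then show "k = k'" using h by auto
  qed
  have fp: "fperm w i = E!(i-1)" if i: "1 \<le> i" "i \<le> n" for i
  proof -
    define y where "y = E!(i-1)"
    have y: "1 \<le> y" "y \<le> n" using inE[of "i-1"] i by (auto simp: y_def)
    have c1: "card {k \<in> {1..length w}. w!(k-1) < w!(i-1)} = card {z \<in> {1..n}. lev z < lev y}"
    proof -
      have "{z \<in> {1..n}. lev z < lev y} = (\<lambda>k. E!(k-1)) ` {k \<in> {1..length w}. w!(k-1) < w!(i-1)}"
      proof
        show "{z \<in> {1..n}. lev z < lev y} \<subseteq> (\<lambda>k. E!(k-1)) ` {k \<in> {1..length w}. w!(k-1) < w!(i-1)}"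
        proof
          fix z assume z: "z \<in> {z \<in> {1..n}. lev z < lev y}"
          then obtain t where t: "t < n" "E!t = z" using posE by blast
          then show "z \<in> (\<lambda>k. E!(k-1)) ` {k \<in> {1..length w}. w!(k-1) < w!(i-1)}"
            using z i lw len by (intro image_eqI[of _ _ "Suc t"]) (auto simp: w_def y_def)
        qed
      qed (use i inE lw len in \<open>auto simp: w_def y_def\<close>)
      moreover have "inj_on (\<lambda>k. E!(k-1)) {k \<in> {1..length w}. w!(k-1) < w!(i-1)}"
        using lw by (intro inj_on_subset[OF injE]) auto
      ultimately show ?thesis by (simp add: card_image)
    qed
    have c2: "card {k \<in> {1..i}. w!(k-1) = w!(i-1)} = card {z \<in> {1..n}. lev z = lev y \<and> z \<le> y}"
    proof -
      have "{z \<in> {1..n}. lev z = lev y \<and> z \<le> y} = (\<lambda>k. E!(k-1)) ` {k \<in> {1..i}. w!(k-1) = w!(i-1)}"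
      proof
        show "{z \<in> {1..n}. lev z = lev y \<and> z \<le> y} \<subseteq> (\<lambda>k. E!(k-1)) ` {k \<in> {1..i}. w!(k-1) = w!(i-1)}"
        proof
          fix z assume z: "z \<in> {z \<in> {1..n}. lev z = lev y \<and> z \<le> y}"
          then obtain t where t: "t < n" "E!t = z" using posE by blast
          have "t \<le> i - 1"
          proof (cases "z = y")
            case True then show ?thesis using nth_eq_iff_index_eq[OF d, of t "i-1"] t i len by (auto simp: y_def)
          next
            case False
            have "i - 1 < length E" using i len by simp
            then show ?thesis using F(3)[of t "i-1"] False z t len by (auto simp: y_def)
          qed
          then show "z \<in> (\<lambda>k. E!(k-1)) ` {k \<in> {1..i}. w!(k-1) = w!(i-1)}"
            using z t i lw len by (intro image_eqI[of _ _ "Suc t"]) (auto simp: w_def y_def)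
        qed
      next
        show "(\<lambda>k. E!(k-1)) ` {k \<in> {1..i}. w!(k-1) = w!(i-1)} \<subseteq> {z \<in> {1..n}. lev z = lev y \<and> z \<le> y}"
        proof
          fix z assume "z \<in> (\<lambda>k. E!(k-1)) ` {k \<in> {1..i}. w!(k-1) = w!(i-1)}"
          then obtain k where k: "1 \<le> k" "k \<le> i" "w!(k-1) = w!(i-1)" "z = E!(k-1)" by auto
          have lz: "lev z = lev y" using k i len by (simp add: w_def y_def)
          have kk: "i - 1 < length E" "k - 1 < length E" "k - 1 \<le> i - 1" using k i len by auto
          have "\<not> y < z" using F(3)[of "i-1" "k-1"] kk k lz by (auto simp: y_def)
          then show "z \<in> {z \<in> {1..n}. lev z = lev y \<and> z \<le> y}" using lz k i inE[of "k-1"] by auto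
        qed
      qed
      moreover have "inj_on (\<lambda>k. E!(k-1)) {k \<in> {1..i}. w!(k-1) = w!(i-1)}"
        using i by (intro inj_on_subset[OF injE]) auto
      ultimately show ?thesis by (simp add: card_image)
    qed
    have un: "{z \<in> {1..n}. lev z < lev y} \<union> {z \<in> {1..n}. lev z = lev y \<and> z \<le> y} = {1..y}"
    proof (intro set_eqI iffI)
      fix z assume "z \<in> {z \<in> {1..n}. lev z < lev y} \<union> {z \<in> {1..n}. lev z = lev y \<and> z \<le> y}"
      moreover have "lev z < lev y \<Longrightarrow> z \<in> {1..n} \<Longrightarrow> z \<le> y"
        using lev_mono[of y z] y by (cases "y \<le> z") auto
      ultimately show "z \<in> {1..y}" by auto
    next
      fix z assume z: "z \<in> {1..y}"
      then have "lev z \<le> lev y" using y by (intro lev_mono) auto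
      then show "z \<in> {z \<in> {1..n}. lev z < lev y} \<union> {z \<in> {1..n}. lev z = lev y \<and> z \<le> y}"
        using z y by auto
    qed
    have "fperm w i = card {z \<in> {1..n}. lev z < lev y} + card {z \<in> {1..n}. lev z = lev y \<and> z \<le> y}"
      unfolding fperm_def c1 c2 ..
    also have "\<dots> = card {1..y}" unfolding un[symmetric]
      by (rule card_Un_disjoint[symmetric]) (auto intro: finite_subset[of _ "{1..n}"])
    finally show ?thesis by (simp add: y_def)
  qed
  have injf: "inj_on (fperm w) {1..n}"
  proof (rule inj_onI)
    fix i i' assume h: "i \<in> {1..n}" "i' \<in> {1..n}" "fperm w i = fperm w i'"
    then have "E!(i-1) = E!(i'-1)" using fp[of i] fp[of i'] by simp
    then show "i = i'" using inj_onD[OF injE _ h(1,2)] by blast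
  qed
  have invp: "inv_into {1..n} (fperm w) e = Suc t" if "t < n" "E!t = e" for t e
    using that fp by (intro inv_into_f_eq[OF injf]) auto
  show ?thesis
  proof (intro ballI)
    fix i j assume i: "i \<in> {1..n}" and j: "j \<in> {1..n}"
    obtain t where t: "t < n" "E!t = i" using posE i by blast
    obtain u where u: "u < n" "E!u = j" using posE j by blast
    have "Pw w (inv_into {1..n} (fperm w) i) (inv_into {1..n} (fperm w) j) \<longleftrightarrow>
        (int (lev j) - int (lev i) \<ge> 2 \<or> (int (lev j) - int (lev i) = 1 \<and> t < u))"
      unfolding invp[OF t] invp[OF u] Pw_def using t u lw by (simp add: w_def)
    also have "\<dots> \<longleftrightarrow> i \<le> a j"
    proof -
      have aj: "a j < j" using a_lt[of j] j by auto
      have reca: "lev j = (if a j = 0 then 0 else Suc (lev (a j)))" using lev_rec[of j] j by auto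
      consider "lev j \<ge> lev i + 2" | "lev j = Suc (lev i)" | "lev j \<le> lev i" by linarith
      then show ?thesis
      proof cases
        case 1
        then have a0: "a j \<noteq> 0" "lev (a j) > lev i" using reca by (auto split: if_splits)
        have "i \<le> a j"
        proof (rule ccontr)
          assume "\<not> i \<le> a j"
          then have "lev (a j) \<le> lev i" using a0 i by (intro lev_mono) auto
          then show False using a0 by simp
        qed
        then show ?thesis using 1 by auto
      next
        case 2
        then show ?thesis using F(4)[of t u] t u len by auto
      next
        case 3
        have "\<not> i \<le> a j"
        proof
          assume ia: "i \<le> a j"
          then have "a j \<noteq> 0" using i by auto
          moreover have "lev i \<le> lev (a j)" using ia i aj j by (intro lev_mono) auto
          ultimately show False using reca 3 by auto
        qed
        then show ?thesis using 3 by auto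
      qed
    qed
    also have "\<dots> \<longleftrightarrow> R i j" using i j by (auto simp: Rdef)
    finally show "Pw (qseq R n) (inv_into {1..n} (fperm (qseq R n)) i) (inv_into {1..n} (fperm (qseq R n)) j)
      \<longleftrightarrow> R i j" unfolding q w_def .
  qed
qed

end

lemma downset_card:
  assumes fin: "finite S" and pos: "\<And>i. i \<in> S \<Longrightarrow> 1 \<le> i"
    and down: "\<And>i i'. i \<in> S \<Longrightarrow> 1 \<le> i' \<Longrightarrow> i' \<le> i \<Longrightarrow> i' \<in> S"
  shows "S = {1..card (S::nat set)}"
proof (cases "S = {}")
  case True then show ?thesis by simp
next
  case False
  define M where "M = Max S"
  have "S = {1..M}"
  proof
    show "S \<subseteq> {1..M}" using fin pos Max_ge by (auto simp: M_def)
    show "{1..M} \<subseteq> S" using down Max_in[OF fin False] by (auto simp: M_def)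
  qed
  then show ?thesis by simp
qed

lemma uio_from:
  assumes "unit_interval_order n R"
  shows "uio n R (\<lambda>j. card {i. R i j})"
proof -
  obtain x :: "nat \<Rightarrow> real" where
    xm: "\<And>i j. 1 \<le> i \<Longrightarrow> i \<le> j \<Longrightarrow> j \<le> n \<Longrightarrow> x i \<le> x j" and
    xr: "\<And>i j. R i j \<longleftrightarrow> i \<in> {1..n} \<and> j \<in> {1..n} \<and> x i + 1 < x j"
    using assms unfolding unit_interval_order_def by blast
  have sub: "{i. R i j} \<subseteq> {1..<j}" for j
  proof
    fix i assume "i \<in> {i. R i j}"
    then have h: "i \<in> {1..n}" "j \<in> {1..n}" "x i + 1 < x j" using xr by auto
    have "i < j"
    proof (rule ccontr)
      assume "\<not> i < j"
      then have "x j \<le> x i" using xm[of j i] h by auto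
      then show False using h by simp
    qed
    then show "i \<in> {1..<j}" using h by auto
  qed
  have fin: "finite {i. R i j}" for j using sub[of j] finite_subset by blast
  have eq: "{i. R i j} = {1..card {i. R i j}}" for j
  proof (rule downset_card[OF fin])
    show "\<And>i. i \<in> {i. R i j} \<Longrightarrow> 1 \<le> i" using xr by auto
    show "\<And>i i'. i \<in> {i. R i j} \<Longrightarrow> 1 \<le> i' \<Longrightarrow> i' \<le> i \<Longrightarrow> i' \<in> {i. R i j}"
    proof -
      fix i i' assume h: "i \<in> {i. R i j}" "1 \<le> i'" "i' \<le> i"
      then have "x i' \<le> x i" using xm[of i' i] xr by auto
      then show "i' \<in> {i. R i j}" using h xr by auto
    qed
  qed
  show ?thesis
  proof
    fix i j
    show "R i j \<longleftrightarrow> (1 \<le> i \<and> i \<le> card {i. R i j} \<and> 1 \<le> j \<and> j \<le> n)"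
    proof
      assume r: "R i j"
      then have "i \<in> {i. R i j}" by simp
      then have "i \<in> {1..card {i. R i j}}" using eq[of j] by simp
      moreover have "j \<in> {1..n}" using r xr by blast
      ultimately show "1 \<le> i \<and> i \<le> card {i. R i j} \<and> 1 \<le> j \<and> j \<le> n" by simp
    next
      assume h: "1 \<le> i \<and> i \<le> card {i. R i j} \<and> 1 \<le> j \<and> j \<le> n"
      then have "i \<in> {1..card {i. R i j}}" by auto
      then show "R i j" using eq[of j] by blast
    qed
  next
    fix j assume "1 \<le> j" "j \<le> n"
    have "card {i. R i j} \<le> card {1..<j}" using sub by (intro card_mono) auto
    then show "card {i. R i j} < j" using \<open>1 \<le> j\<close> by simp
  next
    fix i j assume h: "i \<le> j" "j \<le> n" "1 \<le> i"
    have "{k. R k i} \<subseteq> {k. R k j}"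
    proof
      fix k assume "k \<in> {k. R k i}"
      then have "k \<in> {1..n}" "x k + 1 < x i" using xr h by auto
      moreover have "x i \<le> x j" using xm h by auto
      ultimately show "k \<in> {k. R k j}" using xr h by auto
    qed
    then show "card {k. R k i} \<le> card {k. R k j}" using fin by (intro card_mono) auto
  qed
qed

theorem mainTheorem5:
  fixes n :: nat and R :: "nat \<Rightarrow> nat \<Rightarrow> bool"
  assumes "unit_interval_order n R"
  shows "\<forall>i \<in> {1..n}. \<forall>j \<in> {1..n}.
           Pw (qU n R) (inv_into {1..n} (fU n R) i) (inv_into {1..n} (fU n R) j)
           \<longleftrightarrow> R i j"
proof -
  interpret uio n R "\<lambda>j. card {i. R i j}" by (rule uio_from[OF assms])
  show ?thesis unfolding qU_def fU_def by (rule fin_main)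
qed

end
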